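(* Let $R$ be a commutative ring and $S$ a multiplicative subset of $R$ satisfying the maximal multiple condition. Then the following are equivalent: (1) $R$ is a uniformly $S$-Noetherian ring; (2) $R$ is an $S$-Noetherian ring; (3) the localization $R_S$ is a Noetherian ring.
   Context: Rings are commutative with identity. $S$ satisfies the maximal multiple condition if there is $s\in S$ such that every $t\in S$ divides $s$ in $R$. $R$ is $S$-Noetherian if for every ideal $I$ there are a finitely generated ideal $K\subseteq I$ and $s\in S$ (possibly depending on $I$) with $sI\subseteq K$. $R$ is uniformly $S$-Noetherian if there is a single $s\in S$ such that for every ideal $I$ there is a finitely generated ideal $K\subseteq I$ with $sI\subseteq K$. *)

theory Defs
  imports "HOL-Algebra.Ring_Divisibility"
begin

definition mult_subset :: "('a, 'b) ring_scheme \<Rightarrow> 'a set \<Rightarrow> bool" where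
  "mult_subset R S \<longleftrightarrow> S \<subseteq> carrier R \<and> \<one>\<^bsub>R\<^esub> \<in> S \<and>
     (\<forall>s\<in>S. \<forall>t\<in>S. s \<otimes>\<^bsub>R\<^esub> t \<in> S)"

definition maximal_multiple :: "('a, 'b) ring_scheme \<Rightarrow> 'a set \<Rightarrow> bool" where
  "maximal_multiple R S \<longleftrightarrow> (\<exists>s\<in>S. \<forall>t\<in>S. t divides\<^bsub>R\<^esub> s)"

definition fin_gen_ideal :: "('a, 'b) ring_scheme \<Rightarrow> 'a set \<Rightarrow> bool" where
  "fin_gen_ideal R K \<longleftrightarrow> (\<exists>A \<subseteq> carrier R. finite A \<and> K = Idl\<^bsub>R\<^esub> A)"

definition S_noetherian :: "('a, 'b) ring_scheme \<Rightarrow> 'a set \<Rightarrow> bool" where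
  "S_noetherian R S \<longleftrightarrow> (\<forall>I. ideal I R \<longrightarrow>
     (\<exists>K s. fin_gen_ideal R K \<and> K \<subseteq> I \<and> s \<in> S \<and> (\<lambda>x. s \<otimes>\<^bsub>R\<^esub> x) ` I \<subseteq> K))"

definition uniformly_S_noetherian :: "('a, 'b) ring_scheme \<Rightarrow> 'a set \<Rightarrow> bool" where
  "uniformly_S_noetherian R S \<longleftrightarrow> (\<exists>s\<in>S. \<forall>I. ideal I R \<longrightarrow>
     (\<exists>K. fin_gen_ideal R K \<and> K \<subseteq> I \<and> (\<lambda>x. s \<otimes>\<^bsub>R\<^esub> x) ` I \<subseteq> K))"

definition loc_rel :: "('a, 'b) ring_scheme \<Rightarrow> 'a set \<Rightarrow> (('a \<times> 'a) \<times> ('a \<times> 'a)) set" where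
  "loc_rel R S = {((r, s), (r', s')). r \<in> carrier R \<and> s \<in> S \<and> r' \<in> carrier R \<and> s' \<in> S \<and>
     (\<exists>u\<in>S. u \<otimes>\<^bsub>R\<^esub> (r \<otimes>\<^bsub>R\<^esub> s' \<ominus>\<^bsub>R\<^esub> r' \<otimes>\<^bsub>R\<^esub> s) = \<zero>\<^bsub>R\<^esub>)}"

definition localization :: "('a, 'b) ring_scheme \<Rightarrow> 'a set \<Rightarrow> ('a \<times> 'a) set ring" where
  "localization R S = \<lparr>
     carrier = (carrier R \<times> S) // loc_rel R S,
     mult = (\<lambda>P Q. \<Union>{loc_rel R S `` {(fst a \<otimes>\<^bsub>R\<^esub> fst b, snd a \<otimes>\<^bsub>R\<^esub> snd b)} | a b. a \<in> P \<and> b \<in> Q}),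
     one = loc_rel R S `` {(\<one>\<^bsub>R\<^esub>, \<one>\<^bsub>R\<^esub>)},
     zero = loc_rel R S `` {(\<zero>\<^bsub>R\<^esub>, \<one>\<^bsub>R\<^esub>)},
     add = (\<lambda>P Q. \<Union>{loc_rel R S `` {(fst a \<otimes>\<^bsub>R\<^esub> snd b \<oplus>\<^bsub>R\<^esub> fst b \<otimes>\<^bsub>R\<^esub> snd a, snd a \<otimes>\<^bsub>R\<^esub> snd b)} | a b. a \<in> P \<and> b \<in> Q}) \<rparr>"

end

theory Submission
  imports Defs
begin

locale locsetup = cring R for R (structure) +
  fixes S :: "'a set" and s0 :: 'a
  assumes S_sub: "S \<subseteq> carrier R" and one_S: "\<one> \<in> S"
    and mult_S: "\<And>s t. s \<in> S \<Longrightarrow> t \<in> S \<Longrightarrow> s \<otimes> t \<in> S"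
    and s0_S: "s0 \<in> S" and s0_max: "\<And>t. t \<in> S \<Longrightarrow> t divides s0"
begin

definition phi where "phi r = loc_rel R S `` {(r, \<one>)}"

abbreviation "L \<equiv> localization R S"

lemma SC: "t \<in> S \<Longrightarrow> t \<in> carrier R" using S_sub by auto

lemma s0C: "s0 \<in> carrier R" using SC s0_S by auto

lemma divE: assumes "t \<in> S" obtains c where "c \<in> carrier R" "s0 = t \<otimes> c"
  using s0_max[OF assms] unfolding factor_def by auto

lemma idemE: obtains a where "a \<in> carrier R" "s0 = s0 \<otimes> s0 \<otimes> a"
  using divE[OF mult_S[OF s0_S s0_S]] by auto

lemma cancel:
  assumes t: "t \<in> S" and X: "X \<in> carrier R" and Y: "Y \<in> carrier R"
    and e: "s0 \<otimes> t \<otimes> X = s0 \<otimes> t \<otimes> Y"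
  shows "s0 \<otimes> X = s0 \<otimes> Y"
proof -
  obtain a where a: "a \<in> carrier R" "s0 = s0 \<otimes> s0 \<otimes> a" using idemE by auto
  obtain c where c: "c \<in> carrier R" "s0 = t \<otimes> c" using divE[OF t] by auto
  have tC: "t \<in> carrier R" using SC t .
  have "s0 \<otimes> X = (s0 \<otimes> s0 \<otimes> a) \<otimes> X" using a by simp
  also have "\<dots> = (s0 \<otimes> (t \<otimes> c) \<otimes> a) \<otimes> X" using c by simp
  also have "\<dots> = (s0 \<otimes> t \<otimes> X) \<otimes> (c \<otimes> a)" using a c tC X s0C by (simp add: m_ac)
  also have "\<dots> = (s0 \<otimes> t \<otimes> Y) \<otimes> (c \<otimes> a)" using e by simp
  also have "\<dots> = (s0 \<otimes> (t \<otimes> c) \<otimes> a) \<otimes> Y" using a c tC Y s0C by (simp add: m_ac)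
  also have "\<dots> = s0 \<otimes> Y" using a c by simp
  finally show ?thesis .
qed

lemma rel_iff:
  "((r, t), (r', t')) \<in> loc_rel R S \<longleftrightarrow> r \<in> carrier R \<and> t \<in> S \<and> r' \<in> carrier R \<and> t' \<in> S \<and>
     s0 \<otimes> r \<otimes> t' = s0 \<otimes> r' \<otimes> t"
proof
  assume h: "((r, t), (r', t')) \<in> loc_rel R S"
  then have C: "r \<in> carrier R" "t \<in> S" "r' \<in> carrier R" "t' \<in> S" unfolding loc_rel_def by auto
  from h obtain u where u: "u \<in> S" "u \<otimes> (r \<otimes> t' \<ominus> r' \<otimes> t) = \<zero>" unfolding loc_rel_def by auto
  obtain c where c: "c \<in> carrier R" "s0 = u \<otimes> c" using divE[OF u(1)] by auto
  have CC: "t \<in> carrier R" "t' \<in> carrier R" "u \<in> carrier R" using C u SC by auto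
  have "s0 \<otimes> (r \<otimes> t' \<ominus> r' \<otimes> t) = c \<otimes> (u \<otimes> (r \<otimes> t' \<ominus> r' \<otimes> t))"
    using c C CC by (simp add: m_ac)
  also have "\<dots> = \<zero>" using u c by simp
  finally have "s0 \<otimes> (r \<otimes> t' \<ominus> r' \<otimes> t) = \<zero>" .
  then have "s0 \<otimes> (r \<otimes> t') \<ominus> s0 \<otimes> (r' \<otimes> t) = \<zero>"
    using C CC s0C by (simp add: r_distr minus_eq r_minus)
  then have "s0 \<otimes> (r \<otimes> t') = s0 \<otimes> (r' \<otimes> t)"
    using C CC s0C by (simp add: r_right_minus_eq)
  then show "r \<in> carrier R \<and> t \<in> S \<and> r' \<in> carrier R \<and> t' \<in> S \<and> s0 \<otimes> r \<otimes> t' = s0 \<otimes> r' \<otimes> t"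
    using C CC s0C by (simp add: m_assoc)
next
  assume h: "r \<in> carrier R \<and> t \<in> S \<and> r' \<in> carrier R \<and> t' \<in> S \<and> s0 \<otimes> r \<otimes> t' = s0 \<otimes> r' \<otimes> t"
  have CC: "t \<in> carrier R" "t' \<in> carrier R" "r \<in> carrier R" "r' \<in> carrier R" using h SC by auto
  have "s0 \<otimes> (r \<otimes> t' \<ominus> r' \<otimes> t) = s0 \<otimes> r \<otimes> t' \<ominus> s0 \<otimes> r' \<otimes> t"
    using CC s0C by (simp add: r_distr minus_eq r_minus m_assoc)
  also have "\<dots> = \<zero>" using h CC s0C by (intro iffD2[OF r_right_minus_eq]) auto
  finally show "((r, t), (r', t')) \<in> loc_rel R S" using h s0_S unfolding loc_rel_def by auto
qed

lemma rel_equiv: "equiv (carrier R \<times> S) (loc_rel R S)"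
proof (rule equivI)
  show "refl_on (carrier R \<times> S) (loc_rel R S)"
    unfolding refl_on_def by (auto simp: rel_iff)
  show "loc_rel R S \<subseteq> (carrier R \<times> S) \<times> (carrier R \<times> S)"
    by (auto simp: loc_rel_def)
  show "sym (loc_rel R S)"
    unfolding sym_def by (auto simp: rel_iff)
  show "trans (loc_rel R S)"
  proof (rule transI)
    fix x y z assume xy: "(x, y) \<in> loc_rel R S" and yz: "(y, z) \<in> loc_rel R S"
    obtain r t where x: "x = (r, t)" by force
    obtain r' t' where y: "y = (r', t')" by force
    obtain r'' t'' where z: "z = (r'', t'')" by force
    from xy yz have h: "r \<in> carrier R" "t \<in> S" "r' \<in> carrier R" "t' \<in> S" "r'' \<in> carrier R" "t'' \<in> S"
      "s0 \<otimes> r \<otimes> t' = s0 \<otimes> r' \<otimes> t" "s0 \<otimes> r' \<otimes> t'' = s0 \<otimes> r'' \<otimes> t'"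
      unfolding x y z rel_iff by auto
    have C: "t \<in> carrier R" "t' \<in> carrier R" "t'' \<in> carrier R" using h SC by auto
    have "s0 \<otimes> t' \<otimes> (r \<otimes> t'') = (s0 \<otimes> r \<otimes> t') \<otimes> t''" using h(1-6) C s0C by (simp add: m_ac)
    also have "\<dots> = (s0 \<otimes> r' \<otimes> t) \<otimes> t''" by (simp only: h(7))
    also have "\<dots> = (s0 \<otimes> r' \<otimes> t'') \<otimes> t" using h(1-6) C s0C by (simp add: m_ac)
    also have "\<dots> = (s0 \<otimes> r'' \<otimes> t') \<otimes> t" by (simp only: h(8))
    also have "\<dots> = s0 \<otimes> t' \<otimes> (r'' \<otimes> t)" using h(1-6) C s0C by (simp add: m_ac)
    finally have "s0 \<otimes> (r \<otimes> t'') = s0 \<otimes> (r'' \<otimes> t)"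
      using h C by (intro cancel[of t']) auto
    then show "(x, z) \<in> loc_rel R S" unfolding x z rel_iff using h C s0C by (simp add: m_assoc)
  qed
qed

lemma phi_carrier: "r \<in> carrier R \<Longrightarrow> phi r \<in> carrier L"
  unfolding phi_def localization_def by (auto intro!: quotientI simp: one_S)

lemma phi_eq: "r \<in> carrier R \<Longrightarrow> r' \<in> carrier R \<Longrightarrow> phi r = phi r' \<longleftrightarrow> s0 \<otimes> r = s0 \<otimes> r'"
  unfolding phi_def using eq_equiv_class_iff[OF rel_equiv, of "(r, \<one>)" "(r', \<one>)"]
  by (auto simp: rel_iff one_S s0C)

lemma in_phi: "a \<in> phi x \<longleftrightarrow> ((x, \<one>), a) \<in> loc_rel R S"
  unfolding phi_def by auto

lemma carrier_L_E:
  assumes "P \<in> carrier L" obtains r where "r \<in> carrier R" "P = phi r"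
proof -
  from assms obtain r t where rt: "r \<in> carrier R" "t \<in> S" "P = loc_rel R S `` {(r, t)}"
    unfolding localization_def by (auto elim!: quotientE)
  obtain c where c: "c \<in> carrier R" "s0 = t \<otimes> c" using divE[OF rt(2)] by auto
  obtain a where a: "a \<in> carrier R" "s0 = s0 \<otimes> s0 \<otimes> a" using idemE by auto
  have tC: "t \<in> carrier R" using SC rt by auto
  have "s0 \<otimes> (r \<otimes> c \<otimes> a) \<otimes> t = (s0 \<otimes> (t \<otimes> c) \<otimes> a) \<otimes> r"
    using a(1) c(1) tC rt(1) s0C by (simp add: m_ac)
  also have "\<dots> = s0 \<otimes> r \<otimes> \<one>" using a(1) c(1) rt(1) s0C by (simp flip: c(2) a(2))
  finally have "((r, t), (r \<otimes> c \<otimes> a, \<one>)) \<in> loc_rel R S"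
    unfolding rel_iff using rt a c one_S by auto
  then have P: "P = phi (r \<otimes> c \<otimes> a)" unfolding rt(3) phi_def
    by (rule equiv_class_eq[OF rel_equiv])
  show ?thesis by (rule that[OF _ P]) (use rt(1) a(1) c(1) in auto)
qed

lemma union_const: "\<Union>{f a b | a b. a \<in> A \<and> b \<in> B} = X"
  if "\<And>a b. a \<in> A \<Longrightarrow> b \<in> B \<Longrightarrow> f a b = X" "a0 \<in> A" "b0 \<in> B" for f A B X a0 b0
proof -
  have "{f a b | a b. a \<in> A \<and> b \<in> B} = {X}" using that by blast
  then show ?thesis by simp
qed

lemma phi_self: "x \<in> carrier R \<Longrightarrow> (x, \<one>) \<in> phi x"
  unfolding in_phi by (simp add: rel_iff one_S s0C)

lemma phi_mult: assumes x: "x \<in> carrier R" and y: "y \<in> carrier R"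
  shows "phi x \<otimes>\<^bsub>L\<^esub> phi y = phi (x \<otimes> y)"
proof -
  have "loc_rel R S `` {(fst a \<otimes> fst b, snd a \<otimes> snd b)} = phi (x \<otimes> y)"
    if a: "a \<in> phi x" and b: "b \<in> phi y" for a b
  proof -
    obtain r t where at: "a = (r, t)" by force
    obtain r' t' where bt: "b = (r', t')" by force
    have h: "r \<in> carrier R" "t \<in> S" "r' \<in> carrier R" "t' \<in> S"
      "s0 \<otimes> x \<otimes> t = s0 \<otimes> r \<otimes> \<one>" "s0 \<otimes> y \<otimes> t' = s0 \<otimes> r' \<otimes> \<one>"
      using a b unfolding at bt in_phi rel_iff by auto
    have C: "t \<in> carrier R" "t' \<in> carrier R" using h SC by auto
    have h5: "s0 \<otimes> r = s0 \<otimes> x \<otimes> t" "s0 \<otimes> r' = s0 \<otimes> y \<otimes> t'" using h(1-6) s0C by auto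
    have "s0 \<otimes> (r \<otimes> r') \<otimes> \<one> = (s0 \<otimes> r) \<otimes> r'" using h(1-4) C s0C by (simp add: m_ac)
    also have "\<dots> = (s0 \<otimes> x \<otimes> t) \<otimes> r'" by (simp only: h5)
    also have "\<dots> = (s0 \<otimes> r') \<otimes> (x \<otimes> t)" using h(1-4) C s0C x by (simp add: m_ac)
    also have "\<dots> = (s0 \<otimes> y \<otimes> t') \<otimes> (x \<otimes> t)" by (simp only: h5)
    also have "\<dots> = s0 \<otimes> (x \<otimes> y) \<otimes> (t \<otimes> t')" using h(1-4) C s0C x y by (simp add: m_ac)
    finally have "((r \<otimes> r', t \<otimes> t'), (x \<otimes> y, \<one>)) \<in> loc_rel R S"
      unfolding rel_iff using h x y mult_S one_S by auto
    then show ?thesis unfolding at bt phi_def by (simp add: equiv_class_eq[OF rel_equiv])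
  qed
  then show ?thesis unfolding localization_def
    apply (simp only: monoid.select_convs ring.select_convs)
    by (rule union_const[OF _ phi_self[OF x] phi_self[OF y]])
qed

lemma phi_add: assumes x: "x \<in> carrier R" and y: "y \<in> carrier R"
  shows "phi x \<oplus>\<^bsub>L\<^esub> phi y = phi (x \<oplus> y)"
proof -
  have "loc_rel R S `` {(fst a \<otimes> snd b \<oplus> fst b \<otimes> snd a, snd a \<otimes> snd b)} = phi (x \<oplus> y)"
    if a: "a \<in> phi x" and b: "b \<in> phi y" for a b
  proof -
    obtain r t where at: "a = (r, t)" by force
    obtain r' t' where bt: "b = (r', t')" by force
    have h: "r \<in> carrier R" "t \<in> S" "r' \<in> carrier R" "t' \<in> S"
      "s0 \<otimes> x \<otimes> t = s0 \<otimes> r \<otimes> \<one>" "s0 \<otimes> y \<otimes> t' = s0 \<otimes> r' \<otimes> \<one>"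
      using a b unfolding at bt in_phi rel_iff by auto
    have C: "t \<in> carrier R" "t' \<in> carrier R" using h SC by auto
    have h5: "s0 \<otimes> r = s0 \<otimes> x \<otimes> t" "s0 \<otimes> r' = s0 \<otimes> y \<otimes> t'" using h(1-6) s0C by auto
    have "s0 \<otimes> (r \<otimes> t' \<oplus> r' \<otimes> t) \<otimes> \<one> = (s0 \<otimes> r) \<otimes> t' \<oplus> (s0 \<otimes> r') \<otimes> t"
      using h(1-4) C s0C by (simp add: m_ac r_distr)
    also have "\<dots> = (s0 \<otimes> x \<otimes> t) \<otimes> t' \<oplus> (s0 \<otimes> y \<otimes> t') \<otimes> t" by (simp only: h5)
    also have "\<dots> = s0 \<otimes> (x \<oplus> y) \<otimes> (t \<otimes> t')" using h(1-4) C s0C x y by (simp add: m_ac r_distr l_distr)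
    finally have "((r \<otimes> t' \<oplus> r' \<otimes> t, t \<otimes> t'), (x \<oplus> y, \<one>)) \<in> loc_rel R S"
      unfolding rel_iff using h x y C mult_S one_S by auto
    then show ?thesis unfolding at bt phi_def by (simp add: equiv_class_eq[OF rel_equiv])
  qed
  then show ?thesis unfolding localization_def
    apply (simp only: monoid.select_convs ring.select_convs)
    by (rule union_const[OF _ phi_self[OF x] phi_self[OF y]])
qed

lemma phi_one: "\<one>\<^bsub>L\<^esub> = phi \<one>" and phi_zero: "\<zero>\<^bsub>L\<^esub> = phi \<zero>"
  unfolding localization_def phi_def by auto

lemma L_cring: "cring L"
proof (rule cringI)
  show "abelian_group L"
  proof (rule abelian_groupI)
    fix x y assume "x \<in> carrier L" "y \<in> carrier L"
    then show "x \<oplus>\<^bsub>L\<^esub> y \<in> carrier L"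
      by (elim carrier_L_E) (simp add: phi_add phi_carrier)
  next
    show "\<zero>\<^bsub>L\<^esub> \<in> carrier L" by (simp add: phi_zero phi_carrier)
  next
    fix x y z assume "x \<in> carrier L" "y \<in> carrier L" "z \<in> carrier L"
    then show "x \<oplus>\<^bsub>L\<^esub> y \<oplus>\<^bsub>L\<^esub> z = x \<oplus>\<^bsub>L\<^esub> (y \<oplus>\<^bsub>L\<^esub> z)"
      by (elim carrier_L_E) (simp add: phi_add a_assoc)
  next
    fix x y assume "x \<in> carrier L" "y \<in> carrier L"
    then show "x \<oplus>\<^bsub>L\<^esub> y = y \<oplus>\<^bsub>L\<^esub> x"
      by (elim carrier_L_E) (simp add: phi_add a_comm)
  next
    fix x assume "x \<in> carrier L"
    then show "\<zero>\<^bsub>L\<^esub> \<oplus>\<^bsub>L\<^esub> x = x"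
      by (elim carrier_L_E) (simp add: phi_add phi_zero)
  next
    fix x assume "x \<in> carrier L"
    then show "\<exists>y\<in>carrier L. y \<oplus>\<^bsub>L\<^esub> x = \<zero>\<^bsub>L\<^esub>"
    proof (elim carrier_L_E)
      fix r assume r: "r \<in> carrier R" "x = phi r"
      show ?thesis
        by (rule bexI[of _ "phi (\<ominus> r)"]) (simp_all add: r phi_add phi_zero phi_carrier l_neg)
    qed
  qed
next
  show "comm_monoid L"
  proof (rule comm_monoidI)
    fix x y assume "x \<in> carrier L" "y \<in> carrier L"
    then show "x \<otimes>\<^bsub>L\<^esub> y \<in> carrier L"
      by (elim carrier_L_E) (simp add: phi_mult phi_carrier)
  next
    show "\<one>\<^bsub>L\<^esub> \<in> carrier L" by (simp add: phi_one phi_carrier)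
  next
    fix x y z assume "x \<in> carrier L" "y \<in> carrier L" "z \<in> carrier L"
    then show "x \<otimes>\<^bsub>L\<^esub> y \<otimes>\<^bsub>L\<^esub> z = x \<otimes>\<^bsub>L\<^esub> (y \<otimes>\<^bsub>L\<^esub> z)"
      by (elim carrier_L_E) (simp add: phi_mult m_assoc)
  next
    fix x assume "x \<in> carrier L"
    then show "\<one>\<^bsub>L\<^esub> \<otimes>\<^bsub>L\<^esub> x = x"
      by (elim carrier_L_E) (simp add: phi_mult phi_one)
  next
    fix x y assume "x \<in> carrier L" "y \<in> carrier L"
    then show "x \<otimes>\<^bsub>L\<^esub> y = y \<otimes>\<^bsub>L\<^esub> x"
      by (elim carrier_L_E) (simp add: phi_mult m_comm)
  qed
next
  fix x y z assume "x \<in> carrier L" "y \<in> carrier L" "z \<in> carrier L"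
  then show "(x \<oplus>\<^bsub>L\<^esub> y) \<otimes>\<^bsub>L\<^esub> z = x \<otimes>\<^bsub>L\<^esub> z \<oplus>\<^bsub>L\<^esub> y \<otimes>\<^bsub>L\<^esub> z"
    by (elim carrier_L_E) (simp add: phi_mult phi_add l_distr)
qed

lemma L_ring: "ring L" using L_cring cring.axioms(1) by blast

lemma phi_hom: "ring_hom_ring R L phi"
  by (rule ring_hom_ringI[OF ring_axioms L_ring])
     (simp_all add: phi_carrier phi_mult phi_add phi_one)

lemma phi_neg: "r \<in> carrier R \<Longrightarrow> phi (\<ominus> r) = \<ominus>\<^bsub>L\<^esub> phi r"
proof -
  assume r: "r \<in> carrier R"
  interpret h: ring_hom_ring R L phi by (rule phi_hom)
  show ?thesis using r by simp
qed

lemma image_ideal: assumes I: "ideal I R" shows "ideal (phi ` I) L"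
proof -
  interpret I: ideal I R by fact
  interpret L: ring L by (rule L_ring)
  have IC: "I \<subseteq> carrier R" by (rule I.a_subset)
  show ?thesis
  proof (rule idealI[OF L_ring])
    show "subgroup (phi ` I) (add_monoid L)"
    proof (rule group.subgroupI[OF L.a_group])
      show "phi ` I \<subseteq> carrier (add_monoid L)" using IC phi_carrier by auto
      show "phi ` I \<noteq> {}" using I.additive_subgroup_axioms additive_subgroup.zero_closed by blast
    next
      fix a assume "a \<in> phi ` I"
      then obtain r where r: "r \<in> I" "a = phi r" by auto
      have "inv\<^bsub>add_monoid L\<^esub> a = \<ominus>\<^bsub>L\<^esub> a" by (simp add: a_inv_def)
      also have "\<dots> = phi (\<ominus> r)" using r IC phi_neg by auto
      finally show "inv\<^bsub>add_monoid L\<^esub> a \<in> phi ` I" using r I.a_inv_closed by auto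
    next
      fix a b assume "a \<in> phi ` I" "b \<in> phi ` I"
      then obtain r r' where r: "r \<in> I" "a = phi r" "r' \<in> I" "b = phi r'" by auto
      then show "a \<otimes>\<^bsub>add_monoid L\<^esub> b \<in> phi ` I"
        using IC phi_add I.a_closed by auto
    qed
  next
    fix a x assume "a \<in> phi ` I" "x \<in> carrier L"
    then obtain r u where r: "r \<in> I" "a = phi r" "u \<in> carrier R" "x = phi u"
      by (auto elim: carrier_L_E)
    then show "x \<otimes>\<^bsub>L\<^esub> a \<in> phi ` I" using IC phi_mult I.I_l_closed by auto
  next
    fix a x assume "a \<in> phi ` I" "x \<in> carrier L"
    then obtain r u where r: "r \<in> I" "a = phi r" "u \<in> carrier R" "x = phi u"
      by (auto elim: carrier_L_E)
    then show "a \<otimes>\<^bsub>L\<^esub> x \<in> phi ` I" using IC phi_mult I.I_r_closed by auto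
  qed
qed

lemma Idl_phi: assumes A: "A \<subseteq> carrier R" and x: "x \<in> Idl A"
  shows "phi x \<in> Idl\<^bsub>L\<^esub> (phi ` A)"
proof -
  have "ideal (Idl\<^bsub>L\<^esub> (phi ` A)) L" using A phi_carrier by (intro ring.genideal_ideal[OF L_ring]) auto
  then have "ideal {r \<in> carrier R. phi r \<in> Idl\<^bsub>L\<^esub> (phi ` A)} R" by (rule ring_hom_ring.ideal_vimage[OF phi_hom])
  moreover have "A \<subseteq> {r \<in> carrier R. phi r \<in> Idl\<^bsub>L\<^esub> (phi ` A)}"
  proof -
    have "phi ` A \<subseteq> carrier L" using A phi_carrier by auto
    then have "phi ` A \<subseteq> Idl\<^bsub>L\<^esub> (phi ` A)" by (rule ring.genideal_self[OF L_ring])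
    then show ?thesis using A by auto
  qed
  ultimately have "Idl A \<subseteq> {r \<in> carrier R. phi r \<in> Idl\<^bsub>L\<^esub> (phi ` A)}" by (rule genideal_minimal)
  then show ?thesis using x by auto
qed

lemma S_noeth_imp_noeth: assumes SN: "S_noetherian R S" shows "noetherian_ring L"
proof (rule ring.noetherian_ringI[OF L_ring])
  fix I assume I: "ideal I L"
  have IC: "I \<subseteq> carrier L" using I ideal.axioms(1) additive_subgroup.a_subset by blast
  let ?J = "{r \<in> carrier R. phi r \<in> I}"
  have J: "ideal ?J R" using I by (rule ring_hom_ring.ideal_vimage[OF phi_hom])
  obtain K s where K: "fin_gen_ideal R K" "K \<subseteq> ?J" "s \<in> S" "(\<lambda>x. s \<otimes> x) ` ?J \<subseteq> K"
    using SN J unfolding S_noetherian_def by blast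
  obtain A where A: "A \<subseteq> carrier R" "finite A" "K = Idl A" using K(1) unfolding fin_gen_ideal_def by auto
  have AK: "A \<subseteq> K" using A genideal_self by auto
  show "\<exists>B \<subseteq> carrier L. finite B \<and> I = Idl\<^bsub>L\<^esub> B"
  proof (intro exI conjI)
    show "phi ` A \<subseteq> carrier L" using A phi_carrier by auto
    show "finite (phi ` A)" using A by auto
    show "I = Idl\<^bsub>L\<^esub> (phi ` A)"
    proof
      show "Idl\<^bsub>L\<^esub> (phi ` A) \<subseteq> I" using I AK K(2) by (intro ring.genideal_minimal[OF L_ring]) auto
    next
      show "I \<subseteq> Idl\<^bsub>L\<^esub> (phi ` A)"
      proof
        fix x assume "x \<in> I"
        then obtain r where r: "r \<in> carrier R" "x = phi r" "r \<in> ?J" using IC by (auto elim: carrier_L_E)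
        have sr: "s \<otimes> r \<in> Idl A" using K(4) r A(3) by auto
        obtain c where c: "c \<in> carrier R" "s0 = s \<otimes> c" using divE[OF K(3)] by auto
        obtain a where a: "a \<in> carrier R" "s0 = s0 \<otimes> s0 \<otimes> a" using idemE by auto
        have sC: "s \<in> carrier R" using K(3) SC by auto
        have mem: "(s \<otimes> r) \<otimes> (c \<otimes> a) \<in> Idl A"
          by (rule ideal.I_r_closed[OF genideal_ideal[OF A(1)] sr]) (simp add: a(1) c(1))
        have "s0 \<otimes> ((s \<otimes> r) \<otimes> (c \<otimes> a)) = (s0 \<otimes> (s \<otimes> c) \<otimes> a) \<otimes> r"
          using sC r(1) a(1) c(1) s0C by (simp add: m_ac)
        also have "\<dots> = s0 \<otimes> r" by (simp flip: c(2) a(2))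
        finally have "phi r = phi ((s \<otimes> r) \<otimes> (c \<otimes> a))"
          using phi_eq sC r(1) a(1) c(1) by auto
        then show "x \<in> Idl\<^bsub>L\<^esub> (phi ` A)" using Idl_phi[OF A(1) mem] r by simp
      qed
    qed
  qed
qed

lemma noeth_imp_unif: assumes N: "noetherian_ring L" shows "uniformly_S_noetherian R S"
  unfolding uniformly_S_noetherian_def
proof (intro bexI[OF _ s0_S] allI impI)
  fix I assume I: "ideal I R"
  have IC: "I \<subseteq> carrier R" using ideal.Icarr[OF I] by blast
  have PI: "ideal (phi ` I) L" using I by (rule image_ideal)
  obtain B where B: "B \<subseteq> carrier L" "finite B" "phi ` I = Idl\<^bsub>L\<^esub> B"
    using noetherian_ring.finetely_gen[OF N PI] by (elim exE conjE) blast
  have "B \<subseteq> Idl\<^bsub>L\<^esub> B" by (rule ring.genideal_self[OF L_ring B(1)])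
  then have "B \<subseteq> phi ` I" using B(3) by simp
  then have "\<forall>b\<in>B. \<exists>r. r \<in> I \<and> phi r = b" unfolding subset_iff image_iff by metis
  from bchoice[OF this] obtain f where f0: "\<forall>b\<in>B. f b \<in> I \<and> phi (f b) = b" by blast
  then have f: "\<And>b. b \<in> B \<Longrightarrow> f b \<in> I \<and> phi (f b) = b" by blast
  define A where "A = f ` B"
  have AI: "A \<subseteq> I" using f unfolding A_def by auto
  have AC: "A \<subseteq> carrier R" using AI IC by auto
  have "phi ` A = (\<lambda>b. phi (f b)) ` B" unfolding A_def by (simp add: image_image)
  also have "\<dots> = (\<lambda>b. b) ` B" using f by (intro image_cong) auto
  finally have BA: "B = phi ` A" by simp
  show "\<exists>K. fin_gen_ideal R K \<and> K \<subseteq> I \<and> (\<lambda>x. s0 \<otimes> x) ` I \<subseteq> K"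
  proof (intro exI conjI)
    show "fin_gen_ideal R (Idl A)" unfolding fin_gen_ideal_def using AC B(2) unfolding A_def by auto
    show "Idl A \<subseteq> I" using I AI by (rule genideal_minimal)
    show "(\<lambda>x. s0 \<otimes> x) ` I \<subseteq> Idl A"
    proof
      fix z assume "z \<in> (\<lambda>x. s0 \<otimes> x) ` I"
      then obtain x where x: "x \<in> I" "z = s0 \<otimes> x" by auto
      have "ideal (phi ` (Idl A)) L" using AC by (intro image_ideal genideal_ideal)
      moreover have "phi ` A \<subseteq> phi ` (Idl A)" using genideal_self[OF AC] by (rule image_mono)
      ultimately have "Idl\<^bsub>L\<^esub> B \<subseteq> phi ` (Idl A)" unfolding BA by (rule ring.genideal_minimal[OF L_ring])
      moreover have "phi x \<in> Idl\<^bsub>L\<^esub> B" using x(1) B(3) by (metis imageI)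
      ultimately have "phi x \<in> phi ` (Idl A)" by (rule subsetD)
      then obtain y where y: "y \<in> Idl A" "phi x = phi y" by (metis imageE)
      have yC: "y \<in> carrier R" by (rule ideal.Icarr[OF genideal_ideal[OF AC] y(1)])
      have xC: "x \<in> carrier R" using x(1) IC by blast
      have "s0 \<otimes> x = s0 \<otimes> y" using y(2) phi_eq[OF xC yC] by simp
      moreover have "s0 \<otimes> y \<in> Idl A" by (rule ideal.I_l_closed[OF genideal_ideal[OF AC] y(1) s0C])
      ultimately show "z \<in> Idl A" using x by simp
    qed
  qed
qed

end

theorem proposition2p5:
  fixes R (structure) and S :: "'a set"
  assumes "cring R" and "mult_subset R S" and "maximal_multiple R S"
  shows "(uniformly_S_noetherian R S \<longleftrightarrow> S_noetherian R S) \<and>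
         (S_noetherian R S \<longleftrightarrow> noetherian_ring (localization R S))"
proof -
  obtain s0 where s0: "s0 \<in> S" "\<And>t. t \<in> S \<Longrightarrow> t divides s0"
    using assms(3) unfolding maximal_multiple_def by auto
  have "locsetup R S s0"
    by (intro locsetup.intro locsetup_axioms.intro assms(1)) (use assms(2) s0 in \<open>auto simp: mult_subset_def\<close>)
  then interpret locsetup R S s0 .
  have U: "uniformly_S_noetherian R S \<Longrightarrow> S_noetherian R S"
    unfolding uniformly_S_noetherian_def S_noetherian_def by blast
  show ?thesis using U S_noeth_imp_noeth noeth_imp_unif by blast
qed

end
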